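(* Let $\mu_\alpha,\mu_\beta$ satisfy Assumption B (see context). Let $\mathcal{E}$ be a compact interval with $\mathrm{supp}(\mu_\alpha\boxplus\mu_\beta)\subset\mathcal{E}$ and $\mathcal{J}:=\{E+i\eta:\ E\in\mathcal{E},\ 0\le\eta\le1\}$. Let $\mathcal{O}_\alpha$ be an open set containing $\{E:\ m_{\mu_\alpha}(E)=0\}$ and $\mathcal{O}_\beta$ an open set containing $\{E:\ m_{\mu_\beta}(E)=0\}$. Then there exist constants $c_1^\alpha,c_2^\alpha,c_3^\alpha,c_1^\beta,c_2^\beta,c_3^\beta>0$ such that $$\inf_{z\in\mathcal{J}\setminus\mathcal{O}_\beta}I_{\mu_\alpha}(\omega_\beta(z))\ge c_1^\alpha,\quad \inf_{z\in\mathcal{J}\setminus\mathcal{O}_\beta}I_{\widehat\mu_\alpha}(\omega_\beta(z))\ge c_2^\alpha,\quad \sup_{z\in\mathcal{J}\setminus\mathcal{O}_\beta}I_{\widehat\mu_\alpha}(\omega_\beta(z))\le c_3^\alpha,$$ $$\inf_{z\in\mathcal{J}\setminus\mathcal{O}_\alpha}I_{\mu_\beta}(\omega_\alpha(z))\ge c_1^\beta,\quad \inf_{z\in\mathcal{J}\setminus\mathcal{O}_\alpha}I_{\widehat\mu_\beta}(\omega_\alpha(z))\ge c_2^\beta,\quad \sup_{z\in\mathcal{J}\setminus\mathcal{O}_\alpha}I_{\widehat\mu_\beta}(\omega_\alpha(z))\le c_3^\beta.$$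
   Context: Assumption B: $\mu_\alpha,\mu_\beta$ are absolutely continuous, centered Borel probability measures on $\mathbb{R}$; $\mu_\alpha$ is supported on $n_\alpha\ge1$ disjoint intervals $[A_j^-,A_j^+]$ and $\mu_\beta$ on $n_\beta\ge1$ disjoint intervals $[B_j^-,B_j^+]$; their densities satisfy power laws at the endpoints of each interval with exponents in $(-1,1)$ (e.g. $C^{-1}<\rho_\alpha(x)/\big((x-A_j^-)^{s_j^-}(A_j^+-x)^{s_j^+}\big)<C$ a.e. on $[A_j^-,A_j^+]$, $-1<s_j^\pm<1$; analogously for $\rho_\beta$). $m_\nu(z)=\int\frac{1}{x-z}\nu(dx)$, $F_\nu=-1/m_\nu$, $I_\nu(\omega)=\int\frac{1}{|x-\omega|^2}\nu(dx)$. Subordination functions: analytic $\omega_\alpha,\omega_\beta:\mathbb{C}^+\to\mathbb{C}^+$ with $\mathrm{Im}\,\omega_{\alpha},\mathrm{Im}\,\omega_\beta\ge\mathrm{Im}\,z$, $\omega_{\alpha}(i\eta)/(i\eta),\omega_\beta(i\eta)/(i\eta)\to1$, and $\omega_\alpha+\omega_\beta-z=F_{\mu_\alpha}\circ\omega_\beta=F_{\mu_\beta}\circ\omega_\alpha$; they extend continuously to $\mathbb{C}^+\cup\mathbb{R}$. $\mu_\alpha\boxplus\mu_\beta$ has $F_{\mu_\alpha\boxplus\mu_\beta}=F_{\mu_\alpha}\circ\omega_\beta$. $\widehat\mu_\alpha$ is the finite Borel measure with $F_{\mu_\alpha}(\omega)-\omega=\int\frac{1}{x-\omega}\widehat\mu_\alpha(dx)$,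 $\omega\in\mathbb{C}^+$; similarly $\widehat\mu_\beta$. *)

theory Defs
  imports "HOL-Probability.Probability"
begin

definition stieltjes :: "real measure \<Rightarrow> complex \<Rightarrow> complex" where
  "stieltjes \<nu> z = (\<integral>x. 1 / (complex_of_real x - z) \<partial>\<nu>)"

definition F_tr :: "real measure \<Rightarrow> complex \<Rightarrow> complex" where
  "F_tr \<nu> z = - 1 / stieltjes \<nu> z"

text \<open>I_nu(omega) = int 1/|x - omega|^2 nu(dx) (as an extended nonnegative real,
  so that it is always defined).\<close>
definition I_tr :: "real measure \<Rightarrow> complex \<Rightarrow> ennreal" where
  "I_tr \<nu> w = (\<integral>\<^sup>+ x. ennreal (1 / (cmod (complex_of_real x - w))\<^sup>2) \<partial>\<nu>)"

definition stieltjes_zero_set :: "real measure \<Rightarrow> real set" where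
  "stieltjes_zero_set \<nu> =
     {E. ((\<lambda>\<eta>. stieltjes \<nu> (Complex E \<eta>)) \<longlongrightarrow> 0) (at_right 0)}"

definition msupport :: "real measure \<Rightarrow> real set" where
  "msupport \<nu> = {x. \<forall>e>0. emeasure \<nu> (ball x e) > 0}"

definition assumption_B :: "real measure \<Rightarrow> bool" where
  "assumption_B \<mu> \<longleftrightarrow>
     prob_space \<mu> \<and> sets \<mu> = sets borel \<and>
     integrable \<mu> (\<lambda>x. x) \<and> (\<integral>x. x \<partial>\<mu>) = 0 \<and>
     (\<exists>\<rho>::real \<Rightarrow> real. \<rho> \<in> borel_measurable borel \<and> (\<forall>x. 0 \<le> \<rho> x) \<and>
        \<mu> = density lborel (\<lambda>x. ennreal (\<rho> x)) \<and>
        (\<exists>(n::nat) (Am::nat \<Rightarrow> real) (Ap::nat \<Rightarrow> real) (sm::nat \<Rightarrow> real)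
            (sp::nat \<Rightarrow> real) (C::real).
           n \<ge> 1 \<and> C > 0 \<and>
           (\<forall>j<n. Am j < Ap j) \<and>
           (\<forall>j. Suc j < n \<longrightarrow> Ap j < Am (Suc j)) \<and>
           (\<forall>j<n. -1 < sm j \<and> sm j < 1 \<and> -1 < sp j \<and> sp j < 1) \<and>
           (AE x in lborel. x \<notin> (\<Union>j<n. {Am j..Ap j}) \<longrightarrow> \<rho> x = 0) \<and>
           (\<forall>j<n. AE x in lborel. x \<in> {Am j..Ap j} \<longrightarrow>
               1 / C < \<rho> x / ((x - Am j) powr sm j * (Ap j - x) powr sp j) \<and>
               \<rho> x / ((x - Am j) powr sm j * (Ap j - x) powr sp j) < C)))"

definition subordination :: "real measure \<Rightarrow> real measure \<Rightarrow>
    (complex \<Rightarrow> complex) \<Rightarrow> (complex \<Rightarrow> complex) \<Rightarrow> bool" where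
  "subordination \<mu>a \<mu>b \<omega>a \<omega>b \<longleftrightarrow>
     \<omega>a holomorphic_on {z. Im z > 0} \<and> \<omega>b holomorphic_on {z. Im z > 0} \<and>
     (\<forall>z. Im z > 0 \<longrightarrow> Im (\<omega>a z) \<ge> Im z \<and> Im (\<omega>b z) \<ge> Im z) \<and>
     ((\<lambda>\<eta>. \<omega>a (\<i> * of_real \<eta>) / (\<i> * of_real \<eta>)) \<longlongrightarrow> 1) at_top \<and>
     ((\<lambda>\<eta>. \<omega>b (\<i> * of_real \<eta>) / (\<i> * of_real \<eta>)) \<longlongrightarrow> 1) at_top \<and>
     (\<forall>z. Im z > 0 \<longrightarrow> \<omega>a z + \<omega>b z - z = F_tr \<mu>a (\<omega>b z) \<and>
                        \<omega>a z + \<omega>b z - z = F_tr \<mu>b (\<omega>a z)) \<and>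
     continuous_on {z. Im z \<ge> 0} \<omega>a \<and> continuous_on {z. Im z \<ge> 0} \<omega>b"

text \<open>nu is the free additive convolution mu_a boxplus mu_b, characterised by
  F_nu = F_{mu_a} o omega_b on the upper half plane.\<close>
definition is_free_conv :: "real measure \<Rightarrow> real measure \<Rightarrow> (complex \<Rightarrow> complex) \<Rightarrow> bool" where
  "is_free_conv \<nu> \<mu>a \<omega>b \<longleftrightarrow>
     prob_space \<nu> \<and> sets \<nu> = sets borel \<and>
     (\<forall>z. Im z > 0 \<longrightarrow> F_tr \<nu> z = F_tr \<mu>a (\<omega>b z))"

definition is_hat :: "real measure \<Rightarrow> real measure \<Rightarrow> bool" where
  "is_hat \<mu>h \<mu> \<longleftrightarrow>
     finite_measure \<mu>h \<and> sets \<mu>h = sets borel \<and>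
     (\<forall>w. Im w > 0 \<longrightarrow> F_tr \<mu> w - w = stieltjes \<mu>h w)"

end

theory Submission
  imports Defs
begin


lemma meas_borel_eq: "sets M = sets borel \<Longrightarrow> borel_measurable M = borel_measurable borel"
  by (rule measurable_cong_sets) auto

lemma cmod_sub_pos: "Im w > 0 \<Longrightarrow> cmod (complex_of_real x - w) \<ge> Im w"
proof -
  assume "Im w > 0"
  then have "Im w = \<bar>Im (complex_of_real x - w)\<bar>" by simp
  then show ?thesis using abs_Im_le_cmod[of "complex_of_real x - w"] by linarith
qed

lemma integrable_stieltjes:
  assumes "finite_measure M" "sets M = sets borel" "Im w > 0"
  shows "integrable M (\<lambda>x. 1 / (complex_of_real x - w))"
proof -
  interpret finite_measure M by fact
  show ?thesis
  proof (rule integrable_const_bound[where B="1 / Im w"])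
    show "AE x in M. norm (1 / (complex_of_real x - w)) \<le> 1 / Im w"
      using cmod_sub_pos[OF assms(3)] assms(3)
      by (auto simp: norm_divide intro!: frac_le)
    show "(\<lambda>x. 1 / (complex_of_real x - w)) \<in> borel_measurable M"
      unfolding meas_borel_eq[OF assms(2)] by measurable
  qed
qed

lemma integrable_Iw:
  assumes "finite_measure M" "sets M = sets borel" "Im w > 0"
  shows "integrable M (\<lambda>x. 1 / (cmod (complex_of_real x - w))\<^sup>2)"
proof -
  interpret finite_measure M by fact
  show ?thesis
  proof (rule integrable_const_bound[where B="1 / (Im w)\<^sup>2"])
    show "AE x in M. norm (1 / (cmod (complex_of_real x - w))\<^sup>2) \<le> 1 / (Im w)\<^sup>2"
      using cmod_sub_pos[OF assms(3)] assms(3)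
      by (auto intro!: frac_le power_mono)
    show "(\<lambda>x. 1 / (cmod (complex_of_real x - w))\<^sup>2) \<in> borel_measurable M"
      unfolding meas_borel_eq[OF assms(2)] by measurable
  qed
qed

lemma Im_inv_sub: "Im (1 / (complex_of_real x - w)) = Im w / (cmod (complex_of_real x - w))\<^sup>2"
  by (simp add: Im_divide cmod_power2 del: )

lemma Im_stieltjes:
  assumes "finite_measure M" "sets M = sets borel" "Im w > 0"
  shows "Im (stieltjes M w) = Im w * (\<integral>x. 1 / (cmod (complex_of_real x - w))\<^sup>2 \<partial>M)"
proof -
  have "Im (stieltjes M w) = (\<integral>x. Im (1 / (complex_of_real x - w)) \<partial>M)"
    unfolding stieltjes_def using integrable_stieltjes[OF assms] by simp
  also have "\<dots> = (\<integral>x. Im w * (1 / (cmod (complex_of_real x - w))\<^sup>2) \<partial>M)"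
    by (simp add: Im_inv_sub)
  also have "\<dots> = Im w * (\<integral>x. 1 / (cmod (complex_of_real x - w))\<^sup>2 \<partial>M)"
    by (rule integral_mult_right_zero)
  finally show ?thesis .
qed

lemma I_tr_eq:
  assumes "finite_measure M" "sets M = sets borel" "Im w > 0"
  shows "I_tr M w = ennreal (\<integral>x. 1 / (cmod (complex_of_real x - w))\<^sup>2 \<partial>M)"
  unfolding I_tr_def using integrable_Iw[OF assms]
  by (intro nn_integral_eq_integral) auto



lemma split_point:
  fixes M :: "real measure"
  assumes "finite_measure M" "sets M = sets borel" "\<And>p. emeasure M (UNIV - {p}) > 0"
  shows "\<exists>t. measure M {..t} > 0 \<and> measure M {t<..} > 0"
proof (rule ccontr)
  assume H0: "\<not> ?thesis"
  interpret finite_borel_measure M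
    using assms by (simp add: finite_borel_measure_def finite_borel_measure_axioms_def)
  have sp: "space M = UNIV" by (rule borel_UNIV)
  define m where "m = measure M UNIV"
  have m0: "m > 0"
  proof -
    have "emeasure M (UNIV - {0}) \<le> emeasure M UNIV"
      by (rule emeasure_mono) (auto simp: sets_M)
    with assms(3)[of 0] have "emeasure M UNIV > 0" by auto
    then show ?thesis unfolding m_def using emeasure_eq_measure sp
      by (metis ennreal_less_zero_iff)
  qed
  have compl: "measure M {t<..} = m - cdf M t" for t
  proof -
    have "measure M (UNIV - {..t}) = measure M UNIV - measure M {..t}"
      by (rule finite_measure_compl[unfolded sp]) (auto simp: sets_M)
    moreover have "UNIV - {..t} = {t<..}" by auto
    ultimately show ?thesis by (simp add: m_def cdf_def)
  qed
  have cb: "cdf M t \<le> m" for t using cdf_bounded[of t] sp m_def by simp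
  have H: "cdf M t = 0 \<or> cdf M t = m" for t
  proof -
    have "\<not> (cdf M t > 0 \<and> m - cdf M t > 0)" using H0 compl[of t] cdf_def2[of M t] by auto
    then show ?thesis using cdf_nonneg[of t] cb[of t] by linarith
  qed
  have "\<forall>\<^sub>F t in at_top. cdf M t > m / 2"
    using cdf_lim_at_top m0 unfolding sp m_def[symmetric]
    by (intro order_tendstoD) auto
  then obtain t1 where t1: "cdf M t1 > m / 2"
    by (meson eventually_at_top_linorder order_refl)
  have t1T: "cdf M t1 = m" using H[of t1] t1 m0 by auto
  have "\<forall>\<^sub>F t in at_bot. cdf M t < m / 2"
    using cdf_lim_at_bot m0 by (intro order_tendstoD) auto
  then obtain t2 where t2: "\<And>t. t \<le> t2 \<Longrightarrow> cdf M t < m / 2"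
    by (auto simp: eventually_at_bot_linorder)
  define T where "T = {t. cdf M t = m}"
  have Tne: "T \<noteq> {}" using t1T T_def by auto
  have Tbdd: "bdd_below T"
  proof (rule bdd_belowI[of _ t2])
    fix t assume "t \<in> T"
    then show "t2 \<le> t" using t2[of t] m0 T_def by (cases "t \<le> t2") auto
  qed
  define t0 where "t0 = Inf T"
  have above: "cdf M t = m" if "t > t0" for t
  proof -
    have "Inf T < t" using that t0_def by simp
    then obtain t' where "t' \<in> T" "t' < t"
      using cInf_less_iff[OF Tne Tbdd] by blast
    then have "cdf M t' \<le> cdf M t" using cdf_nondecreasing by auto
    with \<open>t' \<in> T\<close> cb[of t] show ?thesis unfolding T_def by auto
  qed
  have below: "cdf M t = 0" if "t < t0" for t
  proof -
    have "t \<notin> T" using cInf_lower[OF _ Tbdd, of t] that t0_def by force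
    then show ?thesis using H[of t] T_def by auto
  qed
  have "(cdf M \<longlongrightarrow> cdf M t0) (at_right t0)"
    using cdf_is_right_cont by (simp add: continuous_within)
  moreover have "(cdf M \<longlongrightarrow> m) (at_right t0)"
    by (rule tendsto_eventually) (auto simp: eventually_at_right_less eventually_at_right_field above
        intro!: exI[of _ "t0+1"])
  ultimately have c0: "cdf M t0 = m"
    using tendsto_unique[OF trivial_limit_at_right_real] by blast
  have "(cdf M \<longlongrightarrow> measure M {..<t0}) (at_left t0)" by (rule cdf_at_left)
  moreover have "(cdf M \<longlongrightarrow> 0) (at_left t0)"
    by (rule tendsto_eventually) (auto simp: eventually_at_left_field below
        intro!: exI[of _ "t0-1"])
  ultimately have l0: "measure M {..<t0} = 0"
    using tendsto_unique[OF trivial_limit_at_left_real] by blast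
  have eqU: "UNIV - {t0} = {..<t0} \<union> {t0<..}" by auto
  have "measure M (UNIV - {t0}) = measure M {..<t0} + measure M {t0<..}"
    unfolding eqU by (rule finite_measure_Union) (auto simp: sets_M)
  also have "\<dots> = 0" using l0 compl[of t0] c0 by simp
  finally have "emeasure M (UNIV - {t0}) = 0"
    using emeasure_eq_measure by simp
  with assms(3)[of t0] show False by simp
qed

lemma bounded_part:
  fixes M :: "real measure"
  assumes "finite_measure M" "sets M = sets borel" "S \<in> sets M" "measure M S > 0"
  shows "\<exists>R\<ge>0. measure M (S \<inter> {-R..R}) > 0"
proof (rule ccontr)
  assume H: "\<not> ?thesis"
  interpret finite_measure M by fact
  define A where "A n = S \<inter> {- real n..real n}" for n
  have A: "A n \<in> sets M" for n
    using assms(2,3) unfolding A_def by auto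
  have z: "measure M (A n) = 0" for n
    using H measure_nonneg[of M "A n"] unfolding A_def
    by (metis linorder_not_less of_nat_0_le_iff order_antisym_conv)
  have U: "(\<Union>n. A n) = S"
  proof safe
    fix x assume "x \<in> S"
    have h: "\<bar>x\<bar> \<le> real_of_int \<lceil>\<bar>x\<bar>\<rceil>" by (rule le_of_int_ceiling)
    have h1: "x \<le> real_of_int \<lceil>\<bar>x\<bar>\<rceil>" "- real_of_int \<lceil>\<bar>x\<bar>\<rceil> \<le> x"
      using abs_le_D1[OF h] abs_le_D2[OF h] by linarith+
    have "x \<in> A (nat \<lceil>\<bar>x\<bar>\<rceil>)" unfolding A_def using h1 \<open>x \<in> S\<close> by simp
    then show "x \<in> (\<Union>n. A n)" by blast
  qed (auto simp: A_def)
  have "measure M (\<Union>n. A n) \<le> (\<Sum>n. measure M (A n))"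
    by (rule finite_measure_subadditive_countably) (auto simp: A z)
  then show False using U z assms(4) by simp
qed



lemma I_lower_set:
  fixes M :: "real measure"
  assumes "finite_measure M" "sets M = sets borel" "A \<in> sets borel"
    "\<forall>x\<in>A. complex_of_real x \<noteq> w \<and> \<bar>x\<bar> \<le> R" "cmod w \<le> M0" "R \<ge> 0" "M0 \<ge> 0"
  shows "ennreal (measure M A / (R+M0+1)^2) \<le> I_tr M w"
proof -
  interpret finite_measure M by fact
  define c where "c = 1 / (R+M0+1)^2"
  have AM: "A \<in> sets M" using assms(2,3) by simp
  have "ennreal (measure M A / (R+M0+1)^2) = ennreal (c * measure M A)"
    by (simp add: c_def)
  also have "\<dots> = ennreal c * ennreal (measure M A)"
    by (rule ennreal_mult) (auto simp: c_def)
  also have "\<dots> = ennreal c * emeasure M A"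
    by (simp add: emeasure_eq_measure)
  also have "\<dots> = (\<integral>\<^sup>+x. ennreal c * indicator A x \<partial>M)"
    by (rule nn_integral_cmult_indicator[symmetric]) (rule AM)
  also have "\<dots> \<le> I_tr M w" unfolding I_tr_def
  proof (rule nn_integral_mono)
    fix x
    show "ennreal c * indicator A x \<le> ennreal (1 / (cmod (complex_of_real x - w))\<^sup>2)"
    proof (cases "x \<in> A")
      case True
      then have ne: "complex_of_real x \<noteq> w" and xR: "\<bar>x\<bar> \<le> R" using assms(4) by auto
      have pos: "cmod (complex_of_real x - w) > 0" using ne by simp
      have "cmod (complex_of_real x - w) \<le> cmod (complex_of_real x) + cmod w"
        by (rule norm_triangle_ineq4)
      also have "\<dots> \<le> R + M0" using xR assms(5) by simp
      finally have le: "cmod (complex_of_real x - w) \<le> R + M0 + 1" by simp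
      have "c \<le> 1 / (cmod (complex_of_real x - w))\<^sup>2"
        unfolding c_def using pos le assms(6,7)
        by (intro divide_left_mono power_mono mult_pos_pos zero_less_power) auto
      then show ?thesis using True by (simp add: ennreal_leI)
    qed simp
  qed
  finally show ?thesis .
qed

lemma I_lower:
  fixes M :: "real measure"
  assumes "finite_measure M" "sets M = sets borel" "\<And>p. emeasure M (UNIV - {p}) > 0" "M0 \<ge> 0"
  shows "\<exists>\<delta>>0. \<forall>w. cmod w \<le> M0 \<longrightarrow> ennreal \<delta> \<le> I_tr M w"
proof -
  obtain t where t: "measure M {..t} > 0" "measure M {t<..} > 0"
    using split_point[OF assms(1-3)] by blast
  obtain R1 where R1: "R1 \<ge> 0" "measure M ({..t} \<inter> {-R1..R1}) > 0"
    using bounded_part[OF assms(1,2) _ t(1)] assms(2) by auto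
  obtain R2 where R2: "R2 \<ge> 0" "measure M ({t<..} \<inter> {-R2..R2}) > 0"
    using bounded_part[OF assms(1,2) _ t(2)] assms(2) by auto
  define R where "R = max R1 R2"
  define A1 where "A1 = {..t} \<inter> {-R1..R1}"
  define A2 where "A2 = {t<..} \<inter> {-R2..R2}"
  define \<delta> where "\<delta> = min (measure M A1) (measure M A2) / (R+M0+1)^2"
  have Rp: "R \<ge> 0" using R1 R_def by simp
  have dpos: "\<delta> > 0" unfolding \<delta>_def A1_def A2_def using R1 R2 Rp assms(4)
    by (intro divide_pos_pos) auto
  have main: "ennreal \<delta> \<le> I_tr M w" if w: "cmod w \<le> M0" for w
  proof (cases "\<exists>x\<in>A1. complex_of_real x = w")
    case True
    then obtain x where x: "x \<in> A1" "complex_of_real x = w" by blast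
    have "\<forall>y\<in>A2. complex_of_real y \<noteq> w \<and> \<bar>y\<bar> \<le> R"
      using x unfolding A1_def A2_def R_def by auto
    then have "ennreal (measure M A2 / (R+M0+1)^2) \<le> I_tr M w"
      by (intro I_lower_set[OF assms(1,2)]) (auto simp: A2_def w Rp assms(4))
    moreover have "\<delta> \<le> measure M A2 / (R+M0+1)^2"
      unfolding \<delta>_def by (intro divide_right_mono) auto
    ultimately show ?thesis by (meson ennreal_leI order_trans)
  next
    case False
    have "\<forall>y\<in>A1. complex_of_real y \<noteq> w \<and> \<bar>y\<bar> \<le> R"
      using False unfolding A1_def R_def by auto
    then have "ennreal (measure M A1 / (R+M0+1)^2) \<le> I_tr M w"
      by (intro I_lower_set[OF assms(1,2)]) (auto simp: A1_def w Rp assms(4))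
    moreover have "\<delta> \<le> measure M A1 / (R+M0+1)^2"
      unfolding \<delta>_def by (intro divide_right_mono) auto
    ultimately show ?thesis by (meson ennreal_leI order_trans)
  qed
  show ?thesis using dpos main by blast
qed

lemma I_fatou:
  fixes M :: "real measure"
  assumes "sets M = sets borel" "(w \<longlongrightarrow> w0) sequentially" "\<And>n. I_tr M (w n) \<le> C"
  shows "I_tr M w0 \<le> C"
proof -
  define u where "u n x = ennreal (1 / (cmod (complex_of_real x - w n))\<^sup>2)" for n x
  have "I_tr M w0 \<le> (\<integral>\<^sup>+x. liminf (\<lambda>n. u n x) \<partial>M)" unfolding I_tr_def
  proof (rule nn_integral_mono)
    fix x
    show "ennreal (1 / (cmod (complex_of_real x - w0))\<^sup>2) \<le> liminf (\<lambda>n. u n x)"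
    proof (cases "complex_of_real x = w0")
      case True then show ?thesis by simp
    next
      case False
      have "(\<lambda>n. u n x) \<longlonglongrightarrow> ennreal (1 / (cmod (complex_of_real x - w0))\<^sup>2)"
        unfolding u_def using False
        by (intro tendsto_ennrealI tendsto_divide tendsto_power tendsto_norm tendsto_diff
            tendsto_const assms(2)) auto
      then show ?thesis by (simp add: lim_imp_Liminf)
    qed
  qed
  also have "\<dots> \<le> liminf (\<lambda>n. integral\<^sup>N M (u n))"
    by (rule nn_integral_liminf) (simp add: u_def meas_borel_eq[OF assms(1)])
  also have "\<dots> \<le> limsup (\<lambda>n. integral\<^sup>N M (u n))"
    by (rule Liminf_le_Limsup) simp
  also have "\<dots> \<le> C"
    using assms(3) unfolding u_def I_tr_def by (intro Limsup_bounded) auto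
  finally show ?thesis .
qed

lemma density_atom:
  assumes "\<rho> \<in> borel_measurable borel"
  shows "emeasure (density lborel (\<lambda>x. ennreal (\<rho> x))) {r} = 0"
proof -
  have "emeasure (density lborel (\<lambda>x. ennreal (\<rho> x))) {r} = (\<integral>\<^sup>+x. ennreal (\<rho> x) * indicator {r} x \<partial>lborel)"
    using assms by (intro emeasure_density) auto
  also have "\<dots> = 0"
    by (rule nn_integral_null_set) (simp add: null_sets_def)
  finally show ?thesis .
qed



lemma AE_not_atom:
  fixes M :: "real measure"
  assumes "sets M = sets borel" "emeasure M {r} = 0"
  shows "AE x in M. x \<noteq> r"
  by (rule AE_I'[of "{r}"]) (use assms in \<open>auto simp: null_sets_def\<close>)

lemma atom_limit:
  fixes M :: "real measure"
  assumes "finite_measure M" "sets M = sets borel" "emeasure M {r} = 0"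
  shows "(\<lambda>n. \<integral>x. (1/(real n+1))\<^sup>2 * (1 / (cmod (complex_of_real x - Complex r (1/(real n+1))))\<^sup>2) \<partial>M)
           \<longlonglongrightarrow> 0"
proof -
  interpret finite_measure M by fact
  define e where "e n = 1/(real n+1)" for n
  have e0: "e \<longlonglongrightarrow> 0" unfolding e_def using LIMSEQ_inverse_real_of_nat by (simp add: inverse_eq_divide add.commute)
  have epos: "e n > 0" for n unfolding e_def by simp
  have "(\<lambda>n. \<integral>x. (e n)\<^sup>2 * (1 / (cmod (complex_of_real x - Complex r (e n)))\<^sup>2) \<partial>M) \<longlonglongrightarrow> (\<integral>x. 0 \<partial>M)"
  proof (rule integral_dominated_convergence[where w="\<lambda>x. 1"])
    show "(\<lambda>x. 0::real) \<in> borel_measurable M" by simp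
    show "(\<lambda>x. (e n)\<^sup>2 * (1 / (cmod (complex_of_real x - Complex r (e n)))\<^sup>2)) \<in> borel_measurable M" for n
      unfolding meas_borel_eq[OF assms(2)] by measurable
    show "integrable M (\<lambda>x. 1::real)" by simp
    show "AE x in M. (\<lambda>n. (e n)\<^sup>2 * (1 / (cmod (complex_of_real x - Complex r (e n)))\<^sup>2)) \<longlonglongrightarrow> 0"
      using AE_not_atom[OF assms(2,3)]
    proof eventually_elim
      case (elim x)
      have "(\<lambda>n. Complex r (e n)) \<longlonglongrightarrow> Complex r 0"
        by (intro tendsto_Complex tendsto_const e0)
      then have "(\<lambda>n. (e n)\<^sup>2 * (1 / (cmod (complex_of_real x - Complex r (e n)))\<^sup>2))
          \<longlonglongrightarrow> 0\<^sup>2 * (1 / (cmod (complex_of_real x - Complex r 0))\<^sup>2)"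
        using elim
        by (intro tendsto_mult tendsto_power tendsto_divide tendsto_norm tendsto_diff tendsto_const e0)
           (auto simp: Complex_eq)
      then show ?case by simp
    qed
    show "AE x in M. norm ((e n)\<^sup>2 * (1 / (cmod (complex_of_real x - Complex r (e n)))\<^sup>2)) \<le> 1" for n
    proof (rule AE_I2)
      fix x
      have ge: "cmod (complex_of_real x - Complex r (e n)) \<ge> e n"
        using cmod_sub_pos[of "Complex r (e n)" x] epos[of n] by simp
      then have "(e n)\<^sup>2 \<le> (cmod (complex_of_real x - Complex r (e n)))\<^sup>2"
        using epos[of n] by (intro power_mono) auto
      then show "norm ((e n)\<^sup>2 * (1 / (cmod (complex_of_real x - Complex r (e n)))\<^sup>2)) \<le> 1"
        using epos[of n] ge by (simp add: divide_le_eq_1)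
    qed
  qed
  then show ?thesis unfolding e_def by simp
qed

lemma Im_eta_stieltjes:
  fixes M :: "real measure"
  assumes "finite_measure M" "sets M = sets borel" "\<eta> > 0"
  shows "\<eta> * Im (stieltjes M (Complex r \<eta>)) =
    (\<integral>x. \<eta>\<^sup>2 * (1 / (cmod (complex_of_real x - Complex r \<eta>))\<^sup>2) \<partial>M)"
proof -
  have "(\<integral>x. \<eta>\<^sup>2 * (1 / (cmod (complex_of_real x - Complex r \<eta>))\<^sup>2) \<partial>M)
     = \<eta>\<^sup>2 * (\<integral>x. 1 / (cmod (complex_of_real x - Complex r \<eta>))\<^sup>2 \<partial>M)"
    by (rule integral_mult_right_zero)
  then show ?thesis using Im_stieltjes[OF assms(1,2), of "Complex r \<eta>"] assms(3)
    by (simp add: power2_eq_square)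
qed

lemma pole_algebra:
  fixes p c r ss qq \<eta> :: real
  assumes "\<eta> > 0" "r\<^sup>2 = p*r + c" "qq = r - p" "ss = 2*r - p"
  shows "\<eta> * Im (-1 / (Complex r \<eta> + complex_of_real c / (complex_of_real p - Complex r \<eta>)))
     = (qq * ss + \<eta>\<^sup>2) / (\<eta>\<^sup>2 + ss\<^sup>2)"
proof -
  define w where "w = Complex r \<eta>"
  have pw: "complex_of_real p - w \<noteq> 0" using assms(1) by (auto simp: w_def complex_eq_iff)
  have num: "w * (complex_of_real p - w) + complex_of_real c = Complex (\<eta>\<^sup>2) (-(\<eta> * ss))"
    using assms(2) by (simp add: assms(4) complex_eq_iff w_def algebra_simps power2_eq_square)
  have D: "w + complex_of_real c / (complex_of_real p - w) = Complex (\<eta>\<^sup>2) (-(\<eta> * ss)) / (complex_of_real p - w)"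
    using pw num[symmetric] by (simp add: field_simps)
  have Dn: "Complex (\<eta>\<^sup>2) (-(\<eta> * ss)) \<noteq> 0" using assms(1) by (simp add: complex_eq_iff)
  have "-1 / (w + complex_of_real c / (complex_of_real p - w)) = Complex qq \<eta> / Complex (\<eta>\<^sup>2) (-(\<eta> * ss))"
  proof -
    have "-1 / (w + complex_of_real c / (complex_of_real p - w)) = (w - complex_of_real p) / Complex (\<eta>\<^sup>2) (-(\<eta> * ss))"
      unfolding D using pw Dn by (simp add: field_simps)
    also have "w - complex_of_real p = Complex qq \<eta>" by (simp add: complex_eq_iff w_def assms(3))
    finally show ?thesis .
  qed
  moreover have "\<eta> * Im (Complex qq \<eta> / Complex (\<eta>\<^sup>2) (-(\<eta> * ss))) = (qq * ss + \<eta>\<^sup>2) / (\<eta>\<^sup>2 + ss\<^sup>2)"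
  proof -
    have B: "\<eta>\<^sup>2 + ss\<^sup>2 > 0" using assms(1) by (simp add: add_pos_nonneg)
    have "Im (Complex qq \<eta> / Complex (\<eta>\<^sup>2) (-(\<eta> * ss))) =
        (\<eta> * \<eta>\<^sup>2 - qq * (-(\<eta> * ss))) / ((\<eta>\<^sup>2)\<^sup>2 + (-(\<eta> * ss))\<^sup>2)"
      by (simp add: Im_divide)
    also have "\<dots> = (\<eta> * (qq * ss + \<eta>\<^sup>2)) / (\<eta>\<^sup>2 * (\<eta>\<^sup>2 + ss\<^sup>2))"
      by (simp add: algebra_simps power2_eq_square)
    finally have "\<eta> * Im (Complex qq \<eta> / Complex (\<eta>\<^sup>2) (-(\<eta> * ss))) =
       (\<eta> * \<eta> * (qq * ss + \<eta>\<^sup>2)) / (\<eta>\<^sup>2 * (\<eta>\<^sup>2 + ss\<^sup>2))" by simp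
    also have "\<dots> = (qq * ss + \<eta>\<^sup>2) / (\<eta>\<^sup>2 + ss\<^sup>2)"
      using assms(1) B by (simp add: power2_eq_square)
    finally show ?thesis .
  qed
  ultimately show ?thesis by (simp add: w_def)
qed



lemma hat_nondirac:
  fixes M Mh :: "real measure"
  assumes "is_hat Mh M" "prob_space M" "sets M = sets borel" "\<And>r. emeasure M {r} = 0"
  shows "emeasure Mh (UNIV - {p}) > 0"
proof (rule ccontr)
  assume "\<not> ?thesis"
  then have null: "emeasure Mh (UNIV - {p}) = 0" by (simp add: not_gr_zero)
  have fin: "finite_measure Mh" and sMh: "sets Mh = sets borel"
    and hat: "\<And>w. Im w > 0 \<Longrightarrow> F_tr M w - w = stieltjes Mh w"
    using assms(1) unfolding is_hat_def by auto
  have finM: "finite_measure M" using assms(2) unfolding prob_space_def by blast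
  have spMh: "space Mh = UNIV" using sets_eq_imp_space_eq[OF sMh] by simp
  define c where "c = measure Mh UNIV"
  have c0: "c \<ge> 0" by (simp add: c_def)
  have AEp: "AE x in Mh. x = p"
    by (rule AE_I'[of "UNIV - {p}"]) (use null sMh spMh in \<open>auto simp: null_sets_def\<close>)
  have Sh: "stieltjes Mh w = complex_of_real c / (complex_of_real p - w)" for w
  proof -
    have "stieltjes Mh w = (\<integral>x. 1 / (complex_of_real p - w) \<partial>Mh)"
      unfolding stieltjes_def
    proof (rule integral_cong_AE)
      show "(\<lambda>x. 1 / (complex_of_real x - w)) \<in> borel_measurable Mh"
        unfolding meas_borel_eq[OF sMh] by measurable
      show "(\<lambda>x. 1 / (complex_of_real p - w)) \<in> borel_measurable Mh" by simp
      show "AE x in Mh. 1 / (complex_of_real x - w) = 1 / (complex_of_real p - w)"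
        using AEp by eventually_elim simp
    qed
    then show ?thesis by (simp add: c_def spMh scaleR_conv_of_real)
  qed
  have m: "stieltjes M w = -1 / (w + complex_of_real c / (complex_of_real p - w))" if "Im w > 0" for w
  proof -
    have "F_tr M w = w + complex_of_real c / (complex_of_real p - w)"
    proof -
      have "F_tr M w - w = complex_of_real c / (complex_of_real p - w)" using hat[OF that] Sh[of w] by simp
      then show ?thesis by (metis diff_eq_eq add.commute)
    qed
    moreover have "stieltjes M w = -1 / F_tr M w"
      unfolding F_tr_def by (cases "stieltjes M w = 0") simp_all
    ultimately show ?thesis by simp
  qed
  define e where "e n = 1 / (real n + 1)" for n
  have epos: "e n > 0" for n by (simp add: e_def)
  have ele: "e n \<le> 1" for n by (simp add: e_def)
  have G: "(\<lambda>n. e n * Im (-1 / (Complex r (e n) + complex_of_real c / (complex_of_real p - Complex r (e n))))) \<longlonglongrightarrow> 0" for r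
  proof -
    have "e n * Im (-1 / (Complex r (e n) + complex_of_real c / (complex_of_real p - Complex r (e n))))
      = (\<integral>x. (1/(real n+1))\<^sup>2 * (1 / (cmod (complex_of_real x - Complex r (1/(real n+1))))\<^sup>2) \<partial>M)" for n
      using Im_eta_stieltjes[OF finM assms(3) epos[of n], of r] m[of "Complex r (e n)"] epos[of n]
      by (simp add: e_def)
    then show ?thesis using atom_limit[OF finM assms(3) assms(4)[of r]] by simp
  qed
  show False
  proof (cases "c = 0")
    case True
    have "e n * Im (-1 / (Complex 0 (e n) + complex_of_real c / (complex_of_real p - Complex 0 (e n)))) = 1" for n
      using True epos[of n] by (simp add: Im_divide power2_eq_square)
    with G[of 0] show False by (simp add: LIMSEQ_const_iff)
  next
    case False
    then have cpos: "c > 0" using c0 by simp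
    define S where "S = sqrt (p\<^sup>2 + 4*c)"
    define r where "r = (p + S) / 2"
    define qq where "qq = r - p"
    define ss where "ss = 2*r - p"
    have S2: "S\<^sup>2 = p\<^sup>2 + 4*c" unfolding S_def using cpos by simp
    have Sgt: "S > \<bar>p\<bar>"
    proof -
      have "sqrt (p\<^sup>2) < S" unfolding S_def using cpos by (intro real_sqrt_less_mono) simp
      then show ?thesis by simp
    qed
    have rr: "r\<^sup>2 = p*r + c" unfolding r_def using S2 by (simp add: power2_eq_square field_simps)
    have pS: "p < S" "- S < p" using Sgt by (simp_all add: abs_less_iff)
    have qpos: "qq > 0" unfolding qq_def r_def using pS by (simp add: field_simps)
    have spos: "ss > 0" unfolding ss_def r_def using pS by (simp add: field_simps)
    define \<kappa> where "\<kappa> = qq * ss / (1 + ss\<^sup>2)"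
    have kpos: "\<kappa> > 0" unfolding \<kappa>_def using qpos spos by (simp add: add_pos_nonneg)
    have lb: "\<kappa> \<le> e n * Im (-1 / (Complex r (e n) + complex_of_real c / (complex_of_real p - Complex r (e n))))" for n
    proof -
      have eq: "e n * Im (-1 / (Complex r (e n) + complex_of_real c / (complex_of_real p - Complex r (e n))))
          = (qq * ss + (e n)\<^sup>2) / ((e n)\<^sup>2 + ss\<^sup>2)"
        by (rule pole_algebra[OF epos rr qq_def ss_def])
      have e2: "(e n)\<^sup>2 \<le> 1" using epos[of n] ele[of n] by (simp add: power_le_one)
      have "\<kappa> \<le> (qq * ss + (e n)\<^sup>2) / ((e n)\<^sup>2 + ss\<^sup>2)"
        unfolding \<kappa>_def using qpos spos e2 epos[of n]
        by (intro frac_le) (auto simp: add_pos_nonneg)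
      then show ?thesis using eq by simp
    qed
    have "\<kappa> \<le> 0" by (rule LIMSEQ_le_const[OF G[of r]]) (use lb in blast)
    with kpos show False by simp
  qed
qed

lemma upper_side:
  fixes Ma Mb Mha Mhb :: "real measure"
  assumes "finite_measure Mha" "sets Mha = sets borel" "finite_measure Mhb" "sets Mhb = sets borel"
    "is_hat Mha Ma" "is_hat Mhb Mb"
    "Im z > 0" "Im v \<ge> Im z" "Im w \<ge> Im z"
    "v + w - z = F_tr Ma w" "v + w - z = F_tr Mb v"
    "\<delta> > 0" "ennreal \<delta> \<le> I_tr Mhb v"
  shows "I_tr Mha w \<le> ennreal (1/\<delta>)"
proof -
  define Ia where "Ia = (\<integral>x. 1 / (cmod (complex_of_real x - w))\<^sup>2 \<partial>Mha)"
  define Ib where "Ib = (\<integral>x. 1 / (cmod (complex_of_real x - v))\<^sup>2 \<partial>Mhb)"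
  have wp: "Im w > 0" and vp: "Im v > 0" using assms(7-9) by auto
  have Ia0: "Ia \<ge> 0" unfolding Ia_def by simp
  have Ib0: "Ib \<ge> 0" unfolding Ib_def by simp
  have "stieltjes Mha w = F_tr Ma w - w" using assms(5) wp unfolding is_hat_def by auto
  then have "stieltjes Mha w = v - z" using assms(10)[symmetric] by simp
  then have ea: "Im v - Im z = Im w * Ia"
    using Im_stieltjes[OF assms(1,2) wp] unfolding Ia_def by simp
  have "stieltjes Mhb v = F_tr Mb v - v" using assms(6) vp unfolding is_hat_def by auto
  then have "stieltjes Mhb v = w - z" using assms(11)[symmetric] by simp
  then have eb: "Im w - Im z = Im v * Ib"
    using Im_stieltjes[OF assms(3,4) vp] unfolding Ib_def by simp
  have dI: "\<delta> \<le> Ib"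
    using assms(13) I_tr_eq[OF assms(3,4) vp] Ib0 unfolding Ib_def[symmetric] by simp
  have "(Im w * Ia) * (Im v * Ib) = (Im v - Im z) * (Im w - Im z)" using ea eb by simp
  also have "\<dots> \<le> Im v * Im w"
  proof -
    have "(Im v - Im z) * (Im w - Im z) = Im v * Im w - Im z * (Im v - Im z) - Im z * Im w"
      by (simp add: algebra_simps)
    moreover have "Im z * (Im v - Im z) \<ge> 0" using assms(7,8) by simp
    moreover have "Im z * Im w \<ge> 0" using assms(7) wp by simp
    ultimately show ?thesis by linarith
  qed
  finally have "(Im v * Im w) * (Ia * Ib) \<le> (Im v * Im w) * 1" by (simp add: algebra_simps)
  then have II: "Ia * Ib \<le> 1" using wp vp by (simp add: mult_le_cancel_left_pos)
  have "Ia * \<delta> \<le> Ia * Ib" using dI Ia0 by (simp add: mult_left_mono)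
  with II have "Ia * \<delta> \<le> 1" by simp
  then have "Ia \<le> 1 / \<delta>" using assms(12) by (simp add: le_divide_eq)
  then show ?thesis using I_tr_eq[OF assms(1,2) wp] unfolding Ia_def[symmetric] by (simp add: ennreal_leI)
qed



lemma B_facts:
  assumes "assumption_B \<mu>"
  shows "prob_space \<mu>" "sets \<mu> = sets borel" "\<And>r. emeasure \<mu> {r} = 0"
    "\<And>p. emeasure \<mu> (UNIV - {p}) > 0" "finite_measure \<mu>"
proof -
  show P: "prob_space \<mu>" and S: "sets \<mu> = sets borel" using assms unfolding assumption_B_def by auto
  obtain \<rho> where \<rho>: "\<rho> \<in> borel_measurable borel" "\<mu> = density lborel (\<lambda>x. ennreal (\<rho> x))"
    using assms unfolding assumption_B_def by blast
  show A: "emeasure \<mu> {r} = 0" for r using density_atom[OF \<rho>(1)] \<rho>(2) by simp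
  interpret prob_space \<mu> by (rule P)
  show "finite_measure \<mu>" by (rule finite_measure_axioms)
  have sp: "space \<mu> = UNIV" using sets_eq_imp_space_eq[OF S] by simp
  show "emeasure \<mu> (UNIV - {p}) > 0" for p
  proof -
    have "emeasure \<mu> (UNIV - {p}) = emeasure \<mu> UNIV - emeasure \<mu> {p}"
      by (rule emeasure_Diff) (auto simp: S)
    also have "\<dots> = 1" using A[of p] emeasure_space_1 sp by simp
    finally show ?thesis by simp
  qed
qed

lemma compactK: "compact {z. a \<le> Re z \<and> Re z \<le> b \<and> 0 \<le> Im z \<and> Im z \<le> (2::real)}"
proof (rule compact_eq_bounded_closed[THEN iffD2], rule conjI)
  show "bounded {z. a \<le> Re z \<and> Re z \<le> b \<and> 0 \<le> Im z \<and> Im z \<le> (2::real)}"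
    unfolding bounded_iff
  proof (intro exI[of _ "\<bar>a\<bar> + \<bar>b\<bar> + 2"] ballI)
    fix z assume z: "z \<in> {z. a \<le> Re z \<and> Re z \<le> b \<and> 0 \<le> Im z \<and> Im z \<le> (2::real)}"
    have "cmod z \<le> \<bar>Re z\<bar> + \<bar>Im z\<bar>" by (rule cmod_le)
    also have "\<dots> \<le> \<bar>a\<bar> + \<bar>b\<bar> + 2" using z by auto
    finally show "norm z \<le> \<bar>a\<bar> + \<bar>b\<bar> + 2" by simp
  qed
  show "closed {z. a \<le> Re z \<and> Re z \<le> b \<and> 0 \<le> Im z \<and> Im z \<le> (2::real)}"
    by (intro closed_Collect_conj closed_Collect_le continuous_intros)
qed

lemma omega_bound:
  assumes "continuous_on {z. Im z \<ge> 0} f"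
  shows "\<exists>B>0. \<forall>z. a \<le> Re z \<and> Re z \<le> b \<and> 0 \<le> Im z \<and> Im z \<le> 2 \<longrightarrow> cmod (f z) \<le> B"
proof -
  let ?K = "{z. a \<le> Re z \<and> Re z \<le> b \<and> 0 \<le> Im z \<and> Im z \<le> (2::real)}"
  have "continuous_on ?K f" by (rule continuous_on_subset[OF assms]) auto
  then have "compact (f ` ?K)" by (rule compact_continuous_image[OF _ compactK])
  then have "bounded (f ` ?K)" by (rule compact_imp_bounded)
  then show ?thesis unfolding bounded_pos by auto
qed

lemma side_bounds:
  fixes \<mu>a \<mu>b \<mu>ha \<mu>hb :: "real measure" and \<omega>a \<omega>b :: "complex \<Rightarrow> complex" and a b :: real
  assumes Ba: "assumption_B \<mu>a" and Bb: "assumption_B \<mu>b"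
    and ha: "is_hat \<mu>ha \<mu>a" and hb: "is_hat \<mu>hb \<mu>b"
    and ca: "continuous_on {z. Im z \<ge> 0} \<omega>a" and cb: "continuous_on {z. Im z \<ge> 0} \<omega>b"
    and im: "\<forall>z. Im z > 0 \<longrightarrow> Im (\<omega>a z) \<ge> Im z \<and> Im (\<omega>b z) \<ge> Im z"
    and eq: "\<forall>z. Im z > 0 \<longrightarrow> \<omega>a z + \<omega>b z - z = F_tr \<mu>a (\<omega>b z) \<and> \<omega>a z + \<omega>b z - z = F_tr \<mu>b (\<omega>a z)"
  shows "\<exists>c1 c2 c3 :: real. c1 > 0 \<and> c2 > 0 \<and> c3 > 0 \<and>
     (\<forall>z\<in>{Complex E \<eta> | E \<eta>. E \<in> {a..b} \<and> 0 \<le> \<eta> \<and> \<eta> \<le> 1}.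
        ennreal c1 \<le> I_tr \<mu>a (\<omega>b z) \<and> ennreal c2 \<le> I_tr \<mu>ha (\<omega>b z) \<and> I_tr \<mu>ha (\<omega>b z) \<le> ennreal c3)"
proof -
  have fha: "finite_measure \<mu>ha" "sets \<mu>ha = sets borel" using ha unfolding is_hat_def by auto
  have fhb: "finite_measure \<mu>hb" "sets \<mu>hb = sets borel" using hb unfolding is_hat_def by auto
  note Fa = B_facts[OF Ba] and Fb = B_facts[OF Bb]
  have nda: "emeasure \<mu>ha (UNIV - {p}) > 0" for p by (rule hat_nondirac[OF ha Fa(1,2,3)])
  have ndb: "emeasure \<mu>hb (UNIV - {p}) > 0" for p by (rule hat_nondirac[OF hb Fb(1,2,3)])
  obtain Ma where Ma: "Ma > 0" "\<And>z. a \<le> Re z \<and> Re z \<le> b \<and> 0 \<le> Im z \<and> Im z \<le> 2 \<Longrightarrow> cmod (\<omega>a z) \<le> Ma"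
    using omega_bound[OF ca, of a b] by blast
  obtain Mb where Mb: "Mb > 0" "\<And>z. a \<le> Re z \<and> Re z \<le> b \<and> 0 \<le> Im z \<and> Im z \<le> 2 \<Longrightarrow> cmod (\<omega>b z) \<le> Mb"
    using omega_bound[OF cb, of a b] by blast
  obtain c1 where c1: "c1 > 0" "\<forall>w. cmod w \<le> Mb \<longrightarrow> ennreal c1 \<le> I_tr \<mu>a w"
    using I_lower[OF Fa(5) Fa(2) Fa(4), of Mb] Mb(1) by auto
  obtain c2 where c2: "c2 > 0" "\<forall>w. cmod w \<le> Mb \<longrightarrow> ennreal c2 \<le> I_tr \<mu>ha w"
    using I_lower[OF fha nda, of Mb] Mb(1) by auto
  obtain d where d: "d > 0" "\<forall>w. cmod w \<le> Ma \<longrightarrow> ennreal d \<le> I_tr \<mu>hb w"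
    using I_lower[OF fhb ndb, of Ma] Ma(1) by auto
  have upper: "I_tr \<mu>ha (\<omega>b z) \<le> ennreal (1/d)"
    if z: "a \<le> Re z" "Re z \<le> b" "0 \<le> Im z" "Im z \<le> 1" for z
  proof -
    define zn where "zn n = Complex (Re z) (Im z + 1/(real n + 1))" for n
    have znK: "a \<le> Re (zn n) \<and> Re (zn n) \<le> b \<and> 0 \<le> Im (zn n) \<and> Im (zn n) \<le> 2" for n
    proof -
      have h1: "1/(real n + 1) \<le> 1" "0 \<le> 1/(real n + 1)" by simp_all
      have "Im (zn n) = Im z + 1/(real n + 1)" "Re (zn n) = Re z" by (simp_all add: zn_def)
      then show ?thesis using z h1 by linarith
    qed
    have znp: "Im (zn n) > 0" for n unfolding zn_def using z(3) by (simp add: add_nonneg_pos)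
    have bnd: "I_tr \<mu>ha (\<omega>b (zn n)) \<le> ennreal (1/d)" for n
    proof (rule upper_side[OF fha fhb ha hb znp])
      show "Im (zn n) \<le> Im (\<omega>a (zn n))" "Im (zn n) \<le> Im (\<omega>b (zn n))" using im znp[of n] by auto
      show "\<omega>a (zn n) + \<omega>b (zn n) - zn n = F_tr \<mu>a (\<omega>b (zn n))"
           "\<omega>a (zn n) + \<omega>b (zn n) - zn n = F_tr \<mu>b (\<omega>a (zn n))" using eq znp[of n] by auto
      show "0 < d" by (rule d(1))
      show "ennreal d \<le> I_tr \<mu>hb (\<omega>a (zn n))" using d(2) Ma(2)[OF znK[of n]] by auto
    qed
    have "zn \<longlonglongrightarrow> Complex (Re z) (Im z + 0)" unfolding zn_def
      using LIMSEQ_inverse_real_of_nat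
      by (intro tendsto_Complex tendsto_const tendsto_add) (simp_all add: inverse_eq_divide add.commute)
    then have "zn \<longlonglongrightarrow> z" by simp
    then have "(\<lambda>n. \<omega>b (zn n)) \<longlonglongrightarrow> \<omega>b z"
    proof (rule continuous_on_tendsto_compose[OF cb])
      show "z \<in> {z. 0 \<le> Im z}" using z by simp
      show "\<forall>\<^sub>F n in sequentially. zn n \<in> {z. 0 \<le> Im z}"
        using znp by (intro always_eventually allI) (simp add: less_imp_le)
    qed
    then show ?thesis by (rule I_fatou[OF fha(2)]) (rule bnd)
  qed
  show ?thesis
  proof (intro exI conjI ballI)
    show "c1 > 0" "c2 > 0" by fact+
    show "1/d > 0" using d(1) by simp
    fix z assume "z \<in> {Complex E \<eta> | E \<eta>. E \<in> {a..b} \<and> 0 \<le> \<eta> \<and> \<eta> \<le> 1}"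
    then have z: "a \<le> Re z" "Re z \<le> b" "0 \<le> Im z" "Im z \<le> 1" by auto
    have zK: "cmod (\<omega>b z) \<le> Mb" using Mb(2)[of z] z by simp
    show "ennreal c1 \<le> I_tr \<mu>a (\<omega>b z)" using c1(2) zK by blast
    show "ennreal c2 \<le> I_tr \<mu>ha (\<omega>b z)" using c2(2) zK by blast
    show "I_tr \<mu>ha (\<omega>b z) \<le> ennreal (1/d)" by (rule upper[OF z])
  qed
qed

theorem lemma4p5:
  fixes \<mu>a \<mu>b \<nu> \<mu>ha \<mu>hb :: "real measure"
    and \<omega>a \<omega>b :: "complex \<Rightarrow> complex"
    and a b :: real and Oa Ob :: "real set"
  assumes "assumption_B \<mu>a" and "assumption_B \<mu>b"
    and "subordination \<mu>a \<mu>b \<omega>a \<omega>b"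
    and "is_free_conv \<nu> \<mu>a \<omega>b"
    and "is_hat \<mu>ha \<mu>a" and "is_hat \<mu>hb \<mu>b"
    and "a \<le> b" and "msupport \<nu> \<subseteq> {a..b}"
    and "open Oa" and "stieltjes_zero_set \<mu>a \<subseteq> Oa"
    and "open Ob" and "stieltjes_zero_set \<mu>b \<subseteq> Ob"
  defines "J \<equiv> {Complex E \<eta> | E \<eta>. E \<in> {a..b} \<and> 0 \<le> \<eta> \<and> \<eta> \<le> 1}"
  shows "\<exists>c1a c2a c3a c1b c2b c3b :: real.
           c1a > 0 \<and> c2a > 0 \<and> c3a > 0 \<and> c1b > 0 \<and> c2b > 0 \<and> c3b > 0 \<and>
           (\<forall>z\<in>J. Re z \<notin> Ob \<longrightarrow>
              ennreal c1a \<le> I_tr \<mu>a (\<omega>b z) \<and>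
              ennreal c2a \<le> I_tr \<mu>ha (\<omega>b z) \<and>
              I_tr \<mu>ha (\<omega>b z) \<le> ennreal c3a) \<and>
           (\<forall>z\<in>J. Re z \<notin> Oa \<longrightarrow>
              ennreal c1b \<le> I_tr \<mu>b (\<omega>a z) \<and>
              ennreal c2b \<le> I_tr \<mu>hb (\<omega>a z) \<and>
              I_tr \<mu>hb (\<omega>a z) \<le> ennreal c3b)"
proof -
  have ca: "continuous_on {z. Im z \<ge> 0} \<omega>a" and cb: "continuous_on {z. Im z \<ge> 0} \<omega>b"
    and im: "\<forall>z. Im z > 0 \<longrightarrow> Im (\<omega>a z) \<ge> Im z \<and> Im (\<omega>b z) \<ge> Im z"
    and eq: "\<forall>z. Im z > 0 \<longrightarrow> \<omega>a z + \<omega>b z - z = F_tr \<mu>a (\<omega>b z) \<and> \<omega>a z + \<omega>b z - z = F_tr \<mu>b (\<omega>a z)"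
    using assms(3) unfolding subordination_def by auto
  have im': "\<forall>z. Im z > 0 \<longrightarrow> Im (\<omega>b z) \<ge> Im z \<and> Im (\<omega>a z) \<ge> Im z" using im by auto
  have eq': "\<forall>z. Im z > 0 \<longrightarrow> \<omega>b z + \<omega>a z - z = F_tr \<mu>b (\<omega>a z) \<and> \<omega>b z + \<omega>a z - z = F_tr \<mu>a (\<omega>b z)"
    using eq by (auto simp: add.commute)
  obtain c1a c2a c3a where A: "c1a > 0" "c2a > 0" "c3a > 0"
    "\<forall>z\<in>J. ennreal c1a \<le> I_tr \<mu>a (\<omega>b z) \<and> ennreal c2a \<le> I_tr \<mu>ha (\<omega>b z) \<and> I_tr \<mu>ha (\<omega>b z) \<le> ennreal c3a"
    using side_bounds[OF assms(1,2,5,6) ca cb im eq, of a b] unfolding J_def by blast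
  obtain c1b c2b c3b where B: "c1b > 0" "c2b > 0" "c3b > 0"
    "\<forall>z\<in>J. ennreal c1b \<le> I_tr \<mu>b (\<omega>a z) \<and> ennreal c2b \<le> I_tr \<mu>hb (\<omega>a z) \<and> I_tr \<mu>hb (\<omega>a z) \<le> ennreal c3b"
    using side_bounds[OF assms(2,1,6,5) cb ca im' eq', of a b] unfolding J_def by blast
  show ?thesis
  proof (intro exI conjI ballI impI)
    show "c1a > 0" "c2a > 0" "c3a > 0" "c1b > 0" "c2b > 0" "c3b > 0" by fact+
    fix z assume "z \<in> J"
    then show "ennreal c1a \<le> I_tr \<mu>a (\<omega>b z)" "ennreal c2a \<le> I_tr \<mu>ha (\<omega>b z)"
        "I_tr \<mu>ha (\<omega>b z) \<le> ennreal c3a"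
        "ennreal c1b \<le> I_tr \<mu>b (\<omega>a z)" "ennreal c2b \<le> I_tr \<mu>hb (\<omega>a z)"
        "I_tr \<mu>hb (\<omega>a z) \<le> ennreal c3b"
      using A(4) B(4) by auto
  qed
qed

end
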